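(* Let $f\neq 0$ and $\mu\in\mathbb{R}$. The curve $\left(x^2+y^2-\mu f x\right)^2=f^2(x^2+2y^2)$ (with the origin removed) is the image, under inversion with respect to the circle $x^2+y^2=f^2$, of the conic $$2y^2+(1-\mu^2)x^2+2\mu f x-f^2=0,$$ which has eccentricity $e=\sqrt{(\mu^2+1)/2}$, focal parameter $p=f/2$, and foci at the points $\left(\dfrac{f}{2(\mu\pm e)},0\right)$.
   Context: Inversion with respect to the circle $x^2+y^2=f^2$ maps a point $P\neq 0$ to $f^2P/|P|^2$. *)

theory Defs
  imports "HOL-Analysis.Analysis"
begin

text \<open>Points of the plane are pairs (x, y) of reals; norm and dist on real \<times> real are Euclidean.\<close>

definition inversion :: "real \<Rightarrow> real \<times> real \<Rightarrow> real \<times> real" where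
  "inversion f P = (f\<^sup>2 / (norm P)\<^sup>2) *\<^sub>R P"

definition conic :: "real \<Rightarrow> real \<Rightarrow> (real \<times> real) set" where
  "conic \<mu> f = {(x, y). 2 * y\<^sup>2 + (1 - \<mu>\<^sup>2) * x\<^sup>2 + 2 * \<mu> * f * x - f\<^sup>2 = 0}"

definition curve :: "real \<Rightarrow> real \<Rightarrow> (real \<times> real) set" where
  "curve \<mu> f = {(x, y). (x, y) \<noteq> (0, 0) \<and> (x\<^sup>2 + y\<^sup>2 - \<mu> * f * x)\<^sup>2 = f\<^sup>2 * (x\<^sup>2 + 2 * y\<^sup>2)}"

definition line_dist :: "real \<times> real \<Rightarrow> real \<Rightarrow> real \<times> real \<Rightarrow> real" where
  "line_dist a b P = \<bar>fst a * fst P + snd a * snd P - b\<bar> / norm a"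

definition fd_locus :: "real \<Rightarrow> real \<times> real \<Rightarrow> real \<times> real \<Rightarrow> real \<Rightarrow> (real \<times> real) set" where
  "fd_locus e F a b = {P. dist P F = e * line_dist a b P}"

end

theory Submission
  imports Defs
begin

lemma inv_comp: "inversion f (x,y) = (f\<^sup>2*x/(x\<^sup>2+y\<^sup>2), f\<^sup>2*y/(x\<^sup>2+y\<^sup>2))"
  by (simp add: inversion_def norm_Pair)

lemma nz: "(x::real,y::real) \<noteq> (0,0) \<Longrightarrow> x\<^sup>2+y\<^sup>2 > 0"
  by (metis add_nonneg_nonneg add_pos_nonneg linorder_neqE_linordered_idom not_less prod.inject
      sum_power2_gt_zero_iff zero_le_power2)

lemma inv_inv:
  assumes "(x,y) \<noteq> (0,0)" "f \<noteq> 0"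
  shows "inversion f (inversion f (x,y)) = (x,y)"
proof -
  define k where "k = f\<^sup>2/(x\<^sup>2+y\<^sup>2)"
  have r: "x\<^sup>2+y\<^sup>2 > 0" using nz[OF assms(1)] .
  have kr: "k*(x\<^sup>2+y\<^sup>2) = f\<^sup>2" using r by (auto simp: k_def)
  have kp: "k \<noteq> 0" using assms(2) r by (auto simp: k_def)
  have i1: "inversion f (x,y) = (k*x, k*y)" by (simp add: inv_comp k_def)
  have e0: "(k*x)\<^sup>2+(k*y)\<^sup>2 = k*(k*(x\<^sup>2+y\<^sup>2))" by (simp add: power2_eq_square algebra_simps)
  have e: "(k*x)\<^sup>2+(k*y)\<^sup>2 = k*f\<^sup>2" using kr e0 by simp
  have "inversion f (k*x,k*y) = (f\<^sup>2*(k*x)/(k*f\<^sup>2), f\<^sup>2*(k*y)/(k*f\<^sup>2))"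
    unfolding inv_comp e ..
  also have "\<dots> = (x,y)" using kp assms(2) by simp
  finally show ?thesis using i1 by simp
qed

lemma inv_conic:
  assumes "(x,y) \<noteq> (0,0)" "f \<noteq> 0"
  shows "(x,y) \<in> conic \<mu> f \<longleftrightarrow> inversion f (x,y) \<in> curve \<mu> f"
proof -
  define k where "k = f\<^sup>2/(x\<^sup>2+y\<^sup>2)"
  have r: "x\<^sup>2+y\<^sup>2 > 0" using nz[OF assms(1)] .
  have kr: "k*(x\<^sup>2+y\<^sup>2) = f\<^sup>2" using r by (auto simp: k_def)
  have kp: "k \<noteq> 0" using assms(2) r by (auto simp: k_def)
  have i1: "inversion f (x,y) = (k*x, k*y)" by (simp add: inv_comp k_def)
  have nz2: "(k*x,k*y) \<noteq> (0,0)" using assms(1) kp by auto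
  have a: "((k*x)\<^sup>2+(k*y)\<^sup>2 - \<mu>*f*(k*x))\<^sup>2 = k\<^sup>2 * (f\<^sup>2 - \<mu>*f*x)\<^sup>2"
  proof -
    have "(k*x)\<^sup>2+(k*y)\<^sup>2 - \<mu>*f*(k*x) = k*(k*(x\<^sup>2+y\<^sup>2) - \<mu>*f*x)"
      by (simp add: power2_eq_square algebra_simps)
    then show ?thesis using kr by (simp add: power_mult_distrib)
  qed
  have b: "f\<^sup>2*((k*x)\<^sup>2 + 2*(k*y)\<^sup>2) = k\<^sup>2 * (f\<^sup>2*(x\<^sup>2+2*y\<^sup>2))"
    by (simp add: power2_eq_square algebra_simps)
  have c: "(f\<^sup>2 - \<mu>*f*x)\<^sup>2 - f\<^sup>2*(x\<^sup>2+2*y\<^sup>2) = f\<^sup>2 * (-(2 * y\<^sup>2 + (1 - \<mu>\<^sup>2) * x\<^sup>2 + 2 * \<mu> * f * x - f\<^sup>2))"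
    by (simp add: power2_eq_square algebra_simps)
  have "inversion f (x,y) \<in> curve \<mu> f \<longleftrightarrow> ((k*x)\<^sup>2+(k*y)\<^sup>2 - \<mu>*f*(k*x))\<^sup>2 = f\<^sup>2*((k*x)\<^sup>2 + 2*(k*y)\<^sup>2)"
    using nz2 i1 by (auto simp add: curve_def)
  also have "\<dots> \<longleftrightarrow> k\<^sup>2 * (f\<^sup>2 - \<mu>*f*x)\<^sup>2 = k\<^sup>2 * (f\<^sup>2*(x\<^sup>2+2*y\<^sup>2))"
    unfolding a b ..
  also have "\<dots> \<longleftrightarrow> (f\<^sup>2 - \<mu>*f*x)\<^sup>2 - f\<^sup>2*(x\<^sup>2+2*y\<^sup>2) = 0" using kp by simp
  also have "\<dots> \<longleftrightarrow> (x,y) \<in> conic \<mu> f" unfolding c using assms(2) by (auto simp add: conic_def)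
  finally show ?thesis by simp
qed

lemma part1:
  assumes "f \<noteq> 0"
  shows "inversion f ` conic \<mu> f = curve \<mu> f"
proof
  show "inversion f ` conic \<mu> f \<subseteq> curve \<mu> f"
  proof
    fix Q assume "Q \<in> inversion f ` conic \<mu> f"
    then obtain x y where xy: "(x,y) \<in> conic \<mu> f" "Q = inversion f (x,y)" by auto
    have "(x,y) \<noteq> (0,0)" using xy(1) assms by (auto simp: conic_def)
    then show "Q \<in> curve \<mu> f" using inv_conic xy assms by blast
  qed
next
  show "curve \<mu> f \<subseteq> inversion f ` conic \<mu> f"
  proof
    fix Q assume Q: "Q \<in> curve \<mu> f"
    obtain x y where q: "Q = (x,y)" by fastforce
    have n: "(x,y) \<noteq> (0,0)" using Q q by (auto simp: curve_def)
    obtain u v where uv: "inversion f (x,y) = (u,v)" by fastforce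
    have ii: "inversion f (u,v) = (x,y)" using inv_inv[OF n assms] uv by simp
    have nuv: "(u,v) \<noteq> (0,0)" using ii assms n by (auto simp: inversion_def)
    have "(u,v) \<in> conic \<mu> f" using inv_conic[OF nuv assms] ii Q q by simp
    then show "Q \<in> inversion f ` conic \<mu> f" using ii q by force
  qed
qed

lemma sq_iff: "(a::real) \<ge> 0 \<Longrightarrow> b \<ge> 0 \<Longrightarrow> sqrt a = b \<longleftrightarrow> a = b\<^sup>2" by auto

lemma part2:
  assumes f: "f \<noteq> 0" and e: "e = sqrt ((\<mu>\<^sup>2 + 1) / 2)"
    and sg: "\<sigma> \<in> {1, -1::real}" and s0: "\<mu> + \<sigma> * e \<noteq> 0"
  shows "\<exists>a b. a \<noteq> 0
            \<and> conic \<mu> f = fd_locus e (f / (2 * (\<mu> + \<sigma> * e)), 0) a b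
            \<and> e * line_dist a b (f / (2 * (\<mu> + \<sigma> * e)), 0) = \<bar>f\<bar> / 2"
proof -
  define sv where "sv = \<mu> + \<sigma> * e"
  define cv where "cv = f / (2* sv)"
  have e2: "e\<^sup>2 = (\<mu>\<^sup>2+1)/2" using e by simp
  have mp: "\<mu>\<^sup>2+1>0" by (smt (verit) zero_le_power2)
  have ep: "e > 0" using e mp by simp
  have ss: "\<sigma>\<^sup>2 = 1" using sg by auto
  have s0': "sv \<noteq> 0" using s0 sv_def by simp
  define dv where "dv = cv + \<sigma>*f/(2*e)"
  have cs: "2* sv *cv = f" using s0' by (simp add: cv_def)
  have lin: "4*e\<^sup>2*dv - 4*cv = 2*\<mu>*f"
  proof -
    have "4*e\<^sup>2*dv - 4*cv = 4*cv*(e\<^sup>2-1) + 2*\<sigma>*e*f" using ep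
      by (simp add: dv_def power2_eq_square field_simps)
    also have "sv *(4*cv*(e\<^sup>2-1) + 2*\<sigma>*e*f) = sv *(2*\<mu>*f)"
    proof -
      have "sv *(4*cv*(e\<^sup>2-1) + 2*\<sigma>*e*f) = 2*(2* sv *cv)*(e\<^sup>2-1) + 2*\<sigma>*e*f* sv" by (simp add: algebra_simps)
      also have "\<dots> = f*(2*(e\<^sup>2-1) + 2*\<sigma>*e*(\<mu>+\<sigma>*e))" using cs sv_def by (simp add: algebra_simps)
      also have "\<dots> = f*(2*\<mu>*(\<mu>+\<sigma>*e))" using e2 ss
        by (simp add: power2_eq_square algebra_simps)
      finally show ?thesis using sv_def by (simp add: algebra_simps)
    qed
    hence "4*cv*(e\<^sup>2-1) + 2*\<sigma>*e*f = 2*\<mu>*f" using s0' by simp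
    finally show ?thesis .
  qed
  have cst: "2*cv\<^sup>2 - 2*e\<^sup>2*dv\<^sup>2 = -f\<^sup>2"
  proof -
    have "e\<^sup>2*dv\<^sup>2 = e\<^sup>2*cv\<^sup>2 + \<sigma>*e*f*cv + \<sigma>\<^sup>2*f\<^sup>2/4" using ep
      by (simp add: dv_def power2_eq_square field_simps)
    hence h: "2*cv\<^sup>2 - 2*e\<^sup>2*dv\<^sup>2 + f\<^sup>2 = 2*(cv\<^sup>2*(1-e\<^sup>2) - \<sigma>*e*f*cv + f\<^sup>2/4)" using ss
      by (simp add: algebra_simps)
    have "4* sv\<^sup>2*(cv\<^sup>2*(1-e\<^sup>2) - \<sigma>*e*f*cv + f\<^sup>2/4) = (2* sv *cv)\<^sup>2*(1-e\<^sup>2) - 2*\<sigma>*e*f* sv *(2* sv *cv) + f\<^sup>2* sv\<^sup>2"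
      by (simp add: power2_eq_square algebra_simps)
    also have "\<dots> = f\<^sup>2*((1-e\<^sup>2) - 2*\<sigma>*e* sv + sv\<^sup>2)" unfolding cs by (simp add: power2_eq_square algebra_simps)
    also have "(1-e\<^sup>2) - 2*\<sigma>*e* sv + sv\<^sup>2 = 0" using e2 ss unfolding sv_def
      by (simp add: power2_eq_square algebra_simps)
    finally have "cv\<^sup>2*(1-e\<^sup>2) - \<sigma>*e*f*cv + f\<^sup>2/4 = 0" using s0' by simp
    with h show ?thesis by simp
  qed
  have locus: "conic \<mu> f = fd_locus e (cv, 0) (1,0) dv"
  proof -
    have "\<And>x y. (x,y) \<in> conic \<mu> f \<longleftrightarrow> (x,y) \<in> fd_locus e (cv, 0) (1,0) dv"
    proof -
      fix x y :: real
      have "(x,y) \<in> fd_locus e (cv, 0) (1,0) dv \<longleftrightarrow> sqrt ((x-cv)\<^sup>2 + y\<^sup>2) = e * \<bar>x - dv\<bar>"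
        by (simp add: fd_locus_def line_dist_def dist_Pair_Pair dist_real_def)
      also have "\<dots> \<longleftrightarrow> (x-cv)\<^sup>2 + y\<^sup>2 = (e * \<bar>x - dv\<bar>)\<^sup>2"
        using ep by (intro sq_iff) auto
      also have "\<dots> \<longleftrightarrow> 2*((x-cv)\<^sup>2 + y\<^sup>2 - e\<^sup>2*(x-dv)\<^sup>2) = 0"
        by (simp add: power_mult_distrib) linarith
      also have "2*((x-cv)\<^sup>2 + y\<^sup>2 - e\<^sup>2*(x-dv)\<^sup>2) = 2*y\<^sup>2 + (2-2*e\<^sup>2)*x\<^sup>2 + (4*e\<^sup>2*dv - 4*cv)*x + (2*cv\<^sup>2 - 2*e\<^sup>2*dv\<^sup>2)"
        by (simp add: power2_eq_square algebra_simps)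
      also have "\<dots> = 2 * y\<^sup>2 + (1 - \<mu>\<^sup>2) * x\<^sup>2 + 2 * \<mu> * f * x - f\<^sup>2"
        unfolding lin cst using e2 by simp
      finally show "(x,y) \<in> conic \<mu> f \<longleftrightarrow> (x,y) \<in> fd_locus e (cv, 0) (1,0) dv"
        by (simp add: conic_def)
    qed
    thus ?thesis by auto
  qed
  have ld: "e * line_dist (1,0) dv (cv, 0) = \<bar>f\<bar> / 2"
  proof -
    have "line_dist (1,0) dv (cv,0) = \<bar>\<sigma>*f/(2*e)\<bar>" by (simp add: line_dist_def dv_def)
    also have "\<dots> = \<bar>f\<bar>/(2*e)" using sg ep by (auto simp: abs_mult)
    finally show ?thesis using ep by simp
  qed
  have nz1: "(1::real,0::real) \<noteq> 0" by (simp add: prod_eq_iff)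
  show ?thesis
    using locus ld nz1 unfolding cv_def sv_def by blast
qed

theorem mainTheorem2:
  fixes f \<mu> e :: real
  assumes "f \<noteq> 0"
    and "e = sqrt ((\<mu>\<^sup>2 + 1) / 2)"
  shows "inversion f ` conic \<mu> f = curve \<mu> f
    \<and> (\<forall>\<sigma> \<in> {1, -1::real}. \<mu> + \<sigma> * e \<noteq> 0 \<longrightarrow>
         (\<exists>a b. a \<noteq> 0
            \<and> conic \<mu> f = fd_locus e (f / (2 * (\<mu> + \<sigma> * e)), 0) a b
            \<and> e * line_dist a b (f / (2 * (\<mu> + \<sigma> * e)), 0) = \<bar>f\<bar> / 2))"
  using part1[OF assms(1)] part2[OF assms] by blast

end
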